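(* Consider a partially observed Markov decision process whose latent state at time $t$ is a vector $\mathbf{s}_t=(s_{1,t},\dots,s_{d,t})$, with observations $o_t$, actions $a_t$, rewards $r_t$ and discounted cumulative reward $R_t=\sum_{t'\ge t}\gamma^{t'-t}r_{t'}$, generated according to the causal graph described in the context. Assume that the graphical representation corresponding to this environment model is Markov and faithful to the distribution of the measured data. Then for every state dimension $s_{i,t}$ of $\mathbf{s}_t$: (1) $s_{i,t}\in s^{ar}_t$ iff $s_{i,t}\not\perp\!\!\!\perp R_t\mid a_{t-1:t},s^r_{t-1}$ and $s_{i,t}\not\perp\!\!\!\perp a_{t-1}\mid \mathbf{s}_{t-1}$; (2) $s_{i,t}\in s^{\bar a r}_t$ iff $s_{i,t}\not\perp\!\!\!\perp R_t\mid a_{t-1:t},s^r_{t-1}$ and $s_{i,t}\perp\!\!\!\perp a_{t-1}\mid \mathbf{s}_{t-1}$; (3) $s_{i,t}\in s^{a\bar r}_t$ iff $s_{i,t}\perp\!\!\!\perp R_t\mid a_{t-1:t},s^r_{t-1}$ and $s_{i,t}\not\perp\!\!\!\perp a_{t-1}\mid \mathbf{s}_{t-1}$; (4) $s_{i,t}\in s^{\bar a\bar r}_t$ iff $s_{i,t}\perp\!\!\!\perp R_t\mid a_{t-1:t},s^r_{t-1}$ and $s_{i,t}\perp\!\!\!\perp a_{t-1}\mid \mathbf{s}_{t-1}$.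
   Context: The latent state is partitioned into four blocks $\mathbf{s}_t=(s^{ar}_t,s^{\bar a r}_t,s^{a\bar r}_t,s^{\bar a\bar r}_t)$ according to the causal graph over time: (i) $s^{ar}_t$: dimensions with an incoming edge from $a_{t-1}$ and a directed path to $r_t$; (ii) $s^{\bar a r}_t$: no incoming edge from $a_{t-1}$ but a directed path to $r_t$; (iii) $s^{a\bar r}_t$: an incoming edge from $a_{t-1}$ and no directed path to $r_t$; (iv) $s^{\bar a\bar r}_t$: neither. Write $s^r_t:=(s^{ar}_t,s^{\bar a r}_t)$, $s^{\bar r}_t:=(s^{a\bar r}_t,s^{\bar a\bar r}_t)$. The graph has the following edges (and no others among these variables): $a_{t-1}\to s^{ar}_t$ and $a_{t-1}\to s^{a\bar r}_t$; $s^r_{t-1}\to s^{ar}_t$ and $s^r_{t-1}\to s^{\bar a r}_t$; $\mathbf{s}_{t-1}\to s^{a\bar r}_t$ and $\mathbf{s}_{t-1}\to s^{\bar a\bar r}_t$; $\mathbf{s}_t\to o_t$; $s^r_t\to r_t$; and possibly $s^r_t\to a_t$. There are no instantaneous causal effects among latent state variables; actions do not directly affect observations. $\gamma\in[0,1]$ is the discount factor and $a_{t-1:t}=(a_{t-1},a_t)$. "Markov" means every d-separation in the graph implies the corresponding conditional independence; "faithful" means there are no conditional independences other than those implied by the Markov condition. *)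

theory Defs
  imports Main
begin

text \<open>S i t is the state dimension s_{i,t},
  A t the action a_t, Obs t the observation o_t, Rw t the reward r_t and
  Ret t the discounted cumulative reward R_t = sum over t' >= t of gamma^(t'-t) r_{t'}.\<close>
datatype 'd node = S 'd nat | A nat | Obs nat | Rw nat | Ret nat

text \<open>The four blocks: AR = s^{ar}, NAR = s^{(not a) r}, ANR = s^{a (not r)},
  NANR = s^{(not a)(not r)}.\<close>
datatype block = AR | NAR | ANR | NANR

definition isR :: "block \<Rightarrow> bool" where
  "isR b \<longleftrightarrow> b = AR \<or> b = NAR"

definition isA :: "block \<Rightarrow> bool" where
  "isA b \<longleftrightarrow> b = AR \<or> b = ANR"

text \<open>Edge relation of the causal graph, given the block assignment blk of the
  state dimensions and the set pa of reward-relevant dimensions that are parents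
  of the action (the optional edges s^r_t -> a_t).\<close>
fun edge :: "('d \<Rightarrow> block) \<Rightarrow> ('d \<Rightarrow> bool) \<Rightarrow> 'd node \<Rightarrow> 'd node \<Rightarrow> bool" where
  "edge blk pa (A t) (S i t') \<longleftrightarrow> t' = Suc t \<and> isA (blk i)"
| "edge blk pa (S j t) (S i t') \<longleftrightarrow> t' = Suc t \<and>
      ((isR (blk j) \<and> isR (blk i)) \<or> \<not> isR (blk i))"
| "edge blk pa (S i t) (Obs t') \<longleftrightarrow> t' = t"
| "edge blk pa (S i t) (Rw t') \<longleftrightarrow> t' = t \<and> isR (blk i)"
| "edge blk pa (S i t) (A t') \<longleftrightarrow> t' = t \<and> pa i"
| "edge blk pa (Rw t') (Ret t) \<longleftrightarrow> t \<le> t'"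
| "edge blk pa _ _ \<longleftrightarrow> False"

definition adj :: "('v \<Rightarrow> 'v \<Rightarrow> bool) \<Rightarrow> 'v \<Rightarrow> 'v \<Rightarrow> bool" where
  "adj E u v \<longleftrightarrow> E u v \<or> E v u"

definition d_connecting :: "('v \<Rightarrow> 'v \<Rightarrow> bool) \<Rightarrow> 'v set \<Rightarrow> 'v list \<Rightarrow> 'v \<Rightarrow> 'v \<Rightarrow> bool" where
  "d_connecting E Z p x y \<longleftrightarrow>
     p \<noteq> [] \<and> hd p = x \<and> last p = y \<and> distinct p \<and>
     (\<forall>k. Suc k < length p \<longrightarrow> adj E (p ! k) (p ! Suc k)) \<and>
     (\<forall>k. 0 < k \<and> Suc k < length p \<longrightarrow>
        (if E (p ! (k - 1)) (p ! k) \<and> E (p ! Suc k) (p ! k)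
         then (\<exists>w\<in>Z. E\<^sup>*\<^sup>* (p ! k) w)
         else p ! k \<notin> Z))"

definition dsep :: "('v \<Rightarrow> 'v \<Rightarrow> bool) \<Rightarrow> 'v set \<Rightarrow> 'v set \<Rightarrow> 'v set \<Rightarrow> bool" where
  "dsep E X Y Z \<longleftrightarrow> \<not> (\<exists>x\<in>X. \<exists>y\<in>Y. \<exists>p. d_connecting E Z p x y)"

text \<open>indep X Y Z stands for "X is independent of Y given Z" in the distribution
  of the data.\<close>
definition markov :: "('v \<Rightarrow> 'v \<Rightarrow> bool) \<Rightarrow> ('v set \<Rightarrow> 'v set \<Rightarrow> 'v set \<Rightarrow> bool) \<Rightarrow> bool" where
  "markov E indep \<longleftrightarrow> (\<forall>X Y Z. X \<inter> Y = {} \<and> X \<inter> Z = {} \<and> Y \<inter> Z = {} \<longrightarrow>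
      dsep E X Y Z \<longrightarrow> indep X Y Z)"

definition faithful :: "('v \<Rightarrow> 'v \<Rightarrow> bool) \<Rightarrow> ('v set \<Rightarrow> 'v set \<Rightarrow> 'v set \<Rightarrow> bool) \<Rightarrow> bool" where
  "faithful E indep \<longleftrightarrow> (\<forall>X Y Z. X \<inter> Y = {} \<and> X \<inter> Z = {} \<and> Y \<inter> Z = {} \<longrightarrow>
      indep X Y Z \<longrightarrow> dsep E X Y Z)"

end

theory Submission imports Defs begin

lemma rtranclp_closed:
  assumes "E\<^sup>*\<^sup>* a b" "P a" "\<And>x y. E x y \<Longrightarrow> P x \<Longrightarrow> P y"
  shows "P b"
  using assms(1,2) by (induction rule: rtranclp_induct) (auto intro: assms(3))

definition "ancR t v \<longleftrightarrow> (\<exists>j x. v = S j x \<and> x \<le> t) \<or> (\<exists>x. v = A x \<and> x \<le> t)"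

lemma ancR_step: "edge blk pa x y \<Longrightarrow> \<not> ancR t x \<Longrightarrow> \<not> ancR t y"
  by (cases x; cases y; auto simp: ancR_def)

lemma ancR_ZR:
  assumes "(edge blk pa)\<^sup>*\<^sup>* v z" "z \<in> {A (t - 1), A t} \<union> {S j (t - 1) | j. isR (blk j)}"
  shows "ancR t v"
proof (rule ccontr)
  assume "\<not> ancR t v"
  then have "\<not> ancR t z" using rtranclp_closed[OF assms(1), of "\<lambda>x. \<not> ancR t x"] ancR_step by blast
  then show False using assms(2) by (auto simp: ancR_def)
qed

definition "inB blk t x \<longleftrightarrow> (\<exists>j t'. x = S j t' \<and> isR (blk j) \<and> t \<le> t')"
definition "upOK t x \<longleftrightarrow> (\<exists>j t'. x = S j t' \<and> t' \<le> t) \<or> (\<exists>t'. x = A t' \<and> t' < t)"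

lemma stepR:
  assumes pa_r: "\<And>j. pa j \<Longrightarrow> isR (blk j)" and t1: "1 \<le> t"
  and "\<not> inB blk t u" "\<not> inB blk t v" "edge blk pa v u \<longrightarrow> upOK t v"
  and "adj (edge blk pa) u v" "adj (edge blk pa) v w"
  and "if edge blk pa u v \<and> edge blk pa w v then ancR t v
       else v \<notin> {A (t - 1), A t} \<union> {S j (t - 1) | j. isR (blk j)}"
  shows "\<not> inB blk t w \<and> (edge blk pa w v \<longrightarrow> upOK t w)"
  using assms by (cases u; cases v; cases w; auto simp: adj_def inB_def upOK_def ancR_def split: if_splits)

lemma baseR:
  assumes pa_r: "\<And>j. pa j \<Longrightarrow> isR (blk j)" and nR: "\<not> isR (blk i)"
    and "adj (edge blk pa) (S i t) v"
  shows "\<not> inB blk t v \<and> (edge blk pa v (S i t) \<longrightarrow> upOK t v)"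
  using assms by (cases v; auto simp: adj_def inB_def upOK_def)

lemma adj_Ret: "adj (edge blk pa) x (Ret t) \<Longrightarrow> \<exists>t'. x = Rw t' \<and> t \<le> t'"
  by (cases x; auto simp: adj_def)

lemma noR:
  assumes pa_r: "\<And>j. pa j \<Longrightarrow> isR (blk j)" and t1: "1 \<le> t" and nR: "\<not> isR (blk i)"
    and dc: "d_connecting (edge blk pa) ({A (t - 1), A t} \<union> {S j (t - 1) | j. isR (blk j)}) p (S i t) (Ret t)"
  shows False
proof -
  let ?E = "edge blk pa"
  let ?Z = "{A (t - 1), A t} \<union> {S j (t - 1) | j. isR (blk j)}"
  from dc have ne: "p \<noteq> []" and hd: "hd p = S i t" and lst: "last p = Ret t"
    and adjs: "\<forall>k. Suc k < length p \<longrightarrow> adj ?E (p!k) (p!Suc k)"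
    and cond: "\<forall>k. 0<k \<and> Suc k < length p \<longrightarrow> (if ?E (p ! (k - 1)) (p ! k) \<and> ?E (p ! Suc k) (p ! k)
         then (\<exists>w\<in>?Z. ?E\<^sup>*\<^sup>* (p ! k) w) else p ! k \<notin> ?Z)"
    unfolding d_connecting_def by blast+
  have p0: "p!0 = S i t" using ne hd by (simp add: hd_conv_nth)
  have pl: "p!(length p - 1) = Ret t" using ne lst by (simp add: last_conv_nth)
  have J: "Suc k < length p \<Longrightarrow> \<not>inB blk t (p!k) \<and> \<not>inB blk t (p!Suc k) \<and> (?E (p!Suc k) (p!k) \<longrightarrow> upOK t (p!Suc k))" for k
  proof (induction k)
    case 0
    have a: "adj ?E (S i t) (p!Suc 0)" using adjs 0 p0 by metis
    have "\<not> inB blk t (S i t)" using nR by (auto simp: inB_def)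
    moreover have "\<not> inB blk t (p!Suc 0) \<and> (?E (p!Suc 0) (S i t) \<longrightarrow> upOK t (p!Suc 0))"
      by (rule baseR[of pa blk i t "p!Suc 0", OF pa_r nR a])
    ultimately show ?case using p0 by simp
  next
    case (Suc k)
    have c: "if ?E (p!k) (p!Suc k) \<and> ?E (p!Suc(Suc k)) (p!Suc k) then \<exists>w\<in>?Z. ?E\<^sup>*\<^sup>* (p!Suc k) w else p!Suc k \<notin> ?Z"
      using cond[rule_format, of "Suc k"] Suc.prems by simp
    then have c': "if ?E (p!k) (p!Suc k) \<and> ?E (p!Suc(Suc k)) (p!Suc k) then ancR t (p!Suc k) else p!Suc k \<notin> ?Z"
    proof (cases "?E (p!k) (p!Suc k) \<and> ?E (p!Suc(Suc k)) (p!Suc k)")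
      case True
      then obtain w where "w \<in> ?Z" "?E\<^sup>*\<^sup>* (p!Suc k) w" using c by auto
      then have "ancR t (p!Suc k)" by (rule ancR_ZR[rotated])
      then show ?thesis using True by simp
    next
      case False
      have "p!Suc k \<notin> ?Z" using c unfolding if_not_P[OF False] .
      then show ?thesis unfolding if_not_P[OF False] .
    qed
    show ?case using stepR[of pa blk t "p!k" "p!Suc k" "p!Suc(Suc k)"] pa_r t1 Suc.IH Suc.prems adjs c' by auto
  qed
  have "length p \<noteq> 1" using p0 pl by auto
  then obtain m where m: "length p = Suc (Suc m)" using ne by (cases p; cases "tl p"; auto)
  have plm: "p!Suc m = Ret t" using pl m by simp
  obtain t' where t': "p!m = Rw t'" "t \<le> t'" using adj_Ret adjs m plm by (metis lessI)
  show False
  proof (cases m)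
    case 0 then show ?thesis using p0 t' by simp
  next
    case (Suc m')
    have "\<not>inB blk t (p!m') \<and> (?E (p!m) (p!m') \<longrightarrow> upOK t (p!m))" using J[of m'] m Suc by auto
    moreover have "adj ?E (p!m') (p!m)" using adjs m Suc by auto
    ultimately show ?thesis using t' by (cases "p!m'"; auto simp: adj_def inB_def upOK_def)
  qed
qed

definition "Dt t x \<longleftrightarrow> (\<exists>j y. x = S j y \<and> t < y) \<or> (\<exists>y. x = A y \<and> t \<le> y) \<or> (\<exists>y. x = Obs y) \<or> (\<exists>y. x = Rw y) \<or> (\<exists>y. x = Ret y)"

lemma Dt_step: "edge blk pa x y \<Longrightarrow> Dt t x \<Longrightarrow> Dt t y"
  by (cases x; cases y; auto simp: Dt_def)

lemma Dt_ZA: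
  assumes "(edge blk pa)\<^sup>*\<^sup>* v z" "Dt t v" "z \<in> {S j (t - 1) | j. True}" "1 \<le> t"
  shows False
proof -
  have "Dt t z" using rtranclp_closed[OF assms(1), of "Dt t"] assms(2) Dt_step by blast
  then show False using assms(3,4) by (auto simp: Dt_def)
qed

lemma stepA:
  assumes "edge blk pa u v" "Dt t v" "adj (edge blk pa) v w" "1 \<le> t"
    and "if edge blk pa u v \<and> edge blk pa w v then (\<exists>z\<in>{S j (t - 1) | j. True}. (edge blk pa)\<^sup>*\<^sup>* v z)
         else v \<notin> {S j (t - 1) | j. True}"
  shows "edge blk pa v w \<and> Dt t w"
proof (cases "edge blk pa w v")
  case True
  then obtain z where "z \<in> {S j (t - 1) | j. True}" "(edge blk pa)\<^sup>*\<^sup>* v z" using assms(1,5) by auto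
  then show ?thesis using Dt_ZA assms by blast
next
  case False
  then have "edge blk pa v w" using assms(3) by (auto simp: adj_def)
  then show ?thesis using Dt_step assms(2) by blast
qed

lemma baseA:
  assumes nA: "\<not> isA (blk i)" and t1: "1 \<le> t" and "adj (edge blk pa) (S i t) v"
    and "if edge blk pa (S i t) v \<and> edge blk pa w v then (\<exists>z\<in>{S j (t - 1) | j. True}. (edge blk pa)\<^sup>*\<^sup>* v z)
         else v \<notin> {S j (t - 1) | j. True}"
  shows "edge blk pa (S i t) v \<and> Dt t v"
  using assms by (cases v; auto simp: adj_def Dt_def split: if_splits)

lemma noA:
  assumes t1: "1 \<le> t" and nA: "\<not> isA (blk i)"
    and dc: "d_connecting (edge blk pa) {S j (t - 1) | j. True} p (S i t) (A (t - 1))"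
  shows False
proof -
  let ?E = "edge blk pa"
  let ?Z = "{S j (t - 1) | j. True}"
  from dc have ne: "p \<noteq> []" and hd: "hd p = S i t" and lst: "last p = A (t - 1)"
    and adjs: "\<forall>k. Suc k < length p \<longrightarrow> adj ?E (p!k) (p!Suc k)"
    and cond: "\<forall>k. 0<k \<and> Suc k < length p \<longrightarrow> (if ?E (p ! (k - 1)) (p ! k) \<and> ?E (p ! Suc k) (p ! k)
         then (\<exists>w\<in>?Z. ?E\<^sup>*\<^sup>* (p ! k) w) else p ! k \<notin> ?Z)"
    unfolding d_connecting_def by blast+
  have p0: "p!0 = S i t" using ne hd by (simp add: hd_conv_nth)
  have pl: "p!(length p - 1) = A (t - 1)" using ne lst by (simp add: last_conv_nth)
  have "length p \<noteq> 1" using p0 pl by auto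
  then obtain m where m: "length p = Suc (Suc m)" using ne by (cases p; cases "tl p"; auto)
  have plm: "p!Suc m = A (t - 1)" using pl m by simp
  have "m \<noteq> 0"
  proof
    assume m0: "m = 0"
    have "adj ?E (p!0) (p!Suc 0)" using adjs m m0 by simp
    then have "adj ?E (S i t) (A (t - 1))" using p0 plm m0 by simp
    then show False using nA t1 by (auto simp: adj_def)
  qed
  then have n3: "Suc (Suc 0) < length p" using m by simp
  have K: "Suc k < length p \<Longrightarrow> ?E (p!k) (p!Suc k) \<and> Dt t (p!Suc k)" for k
  proof (induction k)
    case 0
    have h: "0 < Suc 0 \<and> Suc (Suc 0) < length p" using n3 by blast
    have c: "if ?E (S i t) (p!Suc 0) \<and> ?E (p!Suc (Suc 0)) (p!Suc 0) then \<exists>w\<in>?Z. ?E\<^sup>*\<^sup>* (p!Suc 0) w else p!Suc 0 \<notin> ?Z"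
      using cond[rule_format, OF h] unfolding diff_Suc_1 p0 .
    moreover have a: "adj ?E (S i t) (p!Suc 0)" using adjs 0 p0 by metis
    have "?E (S i t) (p!Suc 0) \<and> Dt t (p!Suc 0)" by (rule baseA[of blk i t pa "p!Suc 0" "p!Suc (Suc 0)", OF nA t1 a c])
    then show ?case using p0 by simp
  next
    case (Suc k)
    have c: "if ?E (p!k) (p!Suc k) \<and> ?E (p!Suc(Suc k)) (p!Suc k) then \<exists>w\<in>?Z. ?E\<^sup>*\<^sup>* (p!Suc k) w else p!Suc k \<notin> ?Z"
      using cond[rule_format, of "Suc k"] Suc.prems by simp
    show ?case using stepA[of blk pa "p!k" "p!Suc k" t "p!Suc(Suc k)"] Suc.IH Suc.prems adjs c t1 by auto
  qed
  have "Dt t (p!Suc m)" using K[of m] m by auto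
  then show False using plm t1 by (auto simp: Dt_def)
qed

lemma posR:
  assumes "isR (blk i)" "1 \<le> t"
  shows "d_connecting (edge blk pa) ({A (t - 1), A t} \<union> {S j (t - 1) | j. isR (blk j)}) [S i t, Rw t, Ret t] (S i t) (Ret t)"
proof -
  have a: "\<forall>k. Suc k < length [S i t, Rw t, Ret t] \<longrightarrow> adj (edge blk pa) ([S i t, Rw t, Ret t] ! k) ([S i t, Rw t, Ret t] ! Suc k)"
  proof (intro allI impI)
    fix k assume "Suc k < length [S i t, Rw t, Ret t]"
    then have "k = 0 \<or> k = 1" by auto
    then show "adj (edge blk pa) ([S i t, Rw t, Ret t] ! k) ([S i t, Rw t, Ret t] ! Suc k)"
      using assms by (auto simp: adj_def)
  qed
  have b: "\<forall>k. 0 < k \<and> Suc k < length [S i t, Rw t, Ret t] \<longrightarrow> k = 1" by auto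
  show ?thesis unfolding d_connecting_def using a b assms by auto
qed

lemma posA:
  assumes "isA (blk i)" "1 \<le> t"
  shows "d_connecting (edge blk pa) {S j (t - 1) | j. True} [S i t, A (t - 1)] (S i t) (A (t - 1))"
proof -
  have a: "\<forall>k. Suc k < length [S i t, A (t - 1)] \<longrightarrow> adj (edge blk pa) ([S i t, A (t - 1)] ! k) ([S i t, A (t - 1)] ! Suc k)"
    using assms by (auto simp: adj_def)
  show ?thesis unfolding d_connecting_def using a by auto
qed

theorem proposition3:
  fixes blk :: "'d::finite \<Rightarrow> block" and pa :: "'d \<Rightarrow> bool"
    and indep :: "'d node set \<Rightarrow> 'd node set \<Rightarrow> 'd node set \<Rightarrow> bool"
    and i :: 'd and t :: nat
  assumes pa_r: "\<And>j. pa j \<Longrightarrow> isR (blk j)"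
    and mk: "markov (edge blk pa) indep"
    and fa: "faithful (edge blk pa) indep"
    and t1: "1 \<le> t"
  defines "ZR \<equiv> {A (t - 1), A t} \<union> {S j (t - 1) | j. isR (blk j)}"
    and "ZA \<equiv> {S j (t - 1) | j. True}"
  shows "(blk i = AR \<longleftrightarrow>
            \<not> indep {S i t} {Ret t} ZR \<and> \<not> indep {S i t} {A (t - 1)} ZA)
       \<and> (blk i = NAR \<longleftrightarrow>
            \<not> indep {S i t} {Ret t} ZR \<and> indep {S i t} {A (t - 1)} ZA)
       \<and> (blk i = ANR \<longleftrightarrow>
            indep {S i t} {Ret t} ZR \<and> \<not> indep {S i t} {A (t - 1)} ZA)
       \<and> (blk i = NANR \<longleftrightarrow>
            indep {S i t} {Ret t} ZR \<and> indep {S i t} {A (t - 1)} ZA)"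
proof -
  have d1: "{S i t} \<inter> {Ret t} = {} \<and> {S i t} \<inter> ZR = {} \<and> {Ret t} \<inter> ZR = {}"
    using t1 unfolding ZR_def by auto
  have d2: "{S i t} \<inter> {A (t - 1)} = {} \<and> {S i t} \<inter> ZA = {} \<and> {A (t - 1)} \<inter> ZA = {}"
    using t1 unfolding ZA_def by auto
  have i1: "indep {S i t} {Ret t} ZR \<longleftrightarrow> dsep (edge blk pa) {S i t} {Ret t} ZR"
  proof
    assume "indep {S i t} {Ret t} ZR"
    then show "dsep (edge blk pa) {S i t} {Ret t} ZR"
      using fa[unfolded faithful_def, rule_format, of "{S i t}" "{Ret t}" ZR] d1 by blast
  next
    assume "dsep (edge blk pa) {S i t} {Ret t} ZR"
    then show "indep {S i t} {Ret t} ZR"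
      using mk[unfolded markov_def, rule_format, of "{S i t}" "{Ret t}" ZR] d1 by blast
  qed
  have i2: "indep {S i t} {A (t - 1)} ZA \<longleftrightarrow> dsep (edge blk pa) {S i t} {A (t - 1)} ZA"
  proof
    assume "indep {S i t} {A (t - 1)} ZA"
    then show "dsep (edge blk pa) {S i t} {A (t - 1)} ZA"
      using fa[unfolded faithful_def, rule_format, of "{S i t}" "{A (t - 1)}" ZA] d2 by blast
  next
    assume "dsep (edge blk pa) {S i t} {A (t - 1)} ZA"
    then show "indep {S i t} {A (t - 1)} ZA"
      using mk[unfolded markov_def, rule_format, of "{S i t}" "{A (t - 1)}" ZA] d2 by blast
  qed
  have e1: "dsep (edge blk pa) {S i t} {Ret t} ZR \<longleftrightarrow> \<not> isR (blk i)"
  proof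
    assume "dsep (edge blk pa) {S i t} {Ret t} ZR"
    then show "\<not> isR (blk i)" using posR[of blk i t pa] t1 unfolding dsep_def ZR_def by blast
  next
    assume "\<not> isR (blk i)"
    then show "dsep (edge blk pa) {S i t} {Ret t} ZR"
      using noR[of pa blk t i] pa_r t1 unfolding dsep_def ZR_def by blast
  qed
  have e2: "dsep (edge blk pa) {S i t} {A (t - 1)} ZA \<longleftrightarrow> \<not> isA (blk i)"
  proof
    assume "dsep (edge blk pa) {S i t} {A (t - 1)} ZA"
    then show "\<not> isA (blk i)" using posA[of blk i t pa] t1 unfolding dsep_def ZA_def by blast
  next
    assume "\<not> isA (blk i)"
    then show "dsep (edge blk pa) {S i t} {A (t - 1)} ZA"
      using noA[of t blk i pa] t1 unfolding dsep_def ZA_def by blast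
  qed
  show ?thesis unfolding i1 i2 e1 e2 by (cases "blk i"; simp add: isR_def isA_def)
qed

end
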